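(* Assume that $K\subset\mathbb{R}^d$ is a convex parameter space with finite diameter, and that $V\subset K$ is a measurable set satisfying $\lim_{\epsilon\to0}\mathrm{vol}(V_\epsilon)<\mathrm{vol}(K)$. Then for any bounded function $f:K\to\mathbb{R}$, the restricted Cheeger constant $\mathcal{C}_f(V)$ is strictly positive.
   Context: $\mathrm{vol}$ is Lebesgue (Borel) measure; $V_\epsilon=\{x\in K:\inf_{y\in V}\|x-y\|_2\le\epsilon\}$. $\mu_f$ is the probability measure on $K$ with density $e^{-f(x)}/\int_Ke^{-f(y)}dy$; for $V\subset K$, $\mathcal{C}_f(V):=\liminf_{\epsilon\searrow0}\inf_{A\subset V}\frac{\mu_f(A_\epsilon)-\mu_f(A)}{\epsilon\,\mu_f(A)}$, where $A_\epsilon=\{x\in K:\inf_{y\in A}\|x-y\|_2\le\epsilon\}$. *)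

theory Defs
  imports "HOL-Analysis.Analysis"
begin

text \<open>The closed epsilon-neighbourhood of A inside K:
  A_eps = {x in K. inf_{y in A} |x - y| <= eps}; for A empty the infimum is +infinity,
  so the neighbourhood is empty.\<close>
definition eps_nbhd :: "'a::euclidean_space set \<Rightarrow> 'a set \<Rightarrow> real \<Rightarrow> 'a set" where
  "eps_nbhd K A e = {x \<in> K. A \<noteq> {} \<and> infdist x A \<le> e}"

definition mu_f :: "'a::euclidean_space set \<Rightarrow> ('a \<Rightarrow> real) \<Rightarrow> 'a set \<Rightarrow> real" where
  "mu_f K f A =
     set_lebesgue_integral lebesgue (A \<inter> K) (\<lambda>x. exp (- f x))
     / set_lebesgue_integral lebesgue K (\<lambda>x. exp (- f x))"

text \<open>Restricted Cheeger constant C_f(V), valued in the extended reals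
  (an infimum over an empty family is +infinity).\<close>
definition cheeger :: "'a::euclidean_space set \<Rightarrow> ('a \<Rightarrow> real) \<Rightarrow> 'a set \<Rightarrow> ereal" where
  "cheeger K f V =
     Liminf (at_right 0) (\<lambda>e.
       INF A \<in> {A. A \<subseteq> V \<and> A \<in> sets lebesgue \<and> mu_f K f A > 0}.
         ereal ((mu_f K f (eps_nbhd K A e) - mu_f K f A) / (e * mu_f K f A)))"

end

theory Submission
  imports Defs
begin



lemma aff_int:
  fixes S :: "'a::euclidean_space set"
  assumes c: "c \<noteq> 0" and S: "S \<in> sets borel"
  shows "emeasure lborel S = ennreal (\<bar>c\<bar>^DIM('a)) * (\<integral>\<^sup>+y. indicator S (u + c *\<^sub>R y) \<partial>lborel)"
proof -
  have "emeasure lborel S = (\<integral>\<^sup>+y. indicator S y \<partial>lborel)" using S by simp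
  also have "\<dots> = (\<integral>\<^sup>+y. indicator S y \<partial>(density (distr lborel borel (\<lambda>x. u + c *\<^sub>R x)) (\<lambda>_. \<bar>c\<bar>^DIM('a))))"
    using lborel_affine[OF c, of u] by simp
  also have "\<dots> = ennreal (\<bar>c\<bar>^DIM('a)) * (\<integral>\<^sup>+y. indicator S (u + c *\<^sub>R y) \<partial>lborel)"
    using S apply (subst nn_integral_density)
      apply simp_all
    apply (subst nn_integral_distr)
      apply (simp_all add: nn_integral_cmult del: nn_integral_indicator)
    done
  finally show ?thesis .
qed

lemma meas_h:
  fixes S :: "'a::euclidean_space set"
  assumes S[measurable]: "S \<in> sets borel"
  shows "(\<lambda>(p, t). indicator S (fst p + t *\<^sub>R (snd p - fst p)) :: ennreal) \<in> borel_measurable ((lborel \<Otimes>\<^sub>M lborel) \<Otimes>\<^sub>M (lborel::real measure))"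
  by measurable



lemma seg_len:
  fixes x y :: "'a::euclidean_space"
  assumes xP: "x \<in> P" and yP: "e < infdist y P" and e: "0 < e" and D: "0 < D" and xy: "dist x y \<le> D"
  shows "\<exists>t0. {t0<..t0 + e/D} \<subseteq> {t \<in> {0..1}. 0 < infdist (x + t *\<^sub>R (y - x)) P \<and> infdist (x + t *\<^sub>R (y - x)) P \<le> e}"
proof -
  define g where "g t = infdist (x + t *\<^sub>R (y - x)) P" for t :: real
  have lip: "\<bar>g s - g t\<bar> \<le> \<bar>s - t\<bar> * D" for s t
  proof -
    have "\<bar>g s - g t\<bar> \<le> dist (x + s *\<^sub>R (y - x)) (x + t *\<^sub>R (y - x))"
      unfolding g_def by (rule infdist_triangle_abs)
    also have "\<dots> = \<bar>s - t\<bar> * norm (y - x)"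
      by (simp add: dist_norm scaleR_diff_left[symmetric])
    also have "\<dots> \<le> \<bar>s - t\<bar> * D"
      using xy by (intro mult_left_mono) (auto simp: dist_norm norm_minus_commute)
    finally show ?thesis .
  qed
  have contg: "continuous_on UNIV g"
    unfolding g_def by (intro continuous_intros)
  define Z where "Z = {0..1} \<inter> g -` {0}"
  have "closed Z"
    unfolding Z_def using contg by (intro closed_Int closed_vimage) auto
  have "0 \<in> Z" using xP by (simp add: Z_def g_def)
  have bdd: "bdd_above Z" unfolding Z_def by (rule bdd_aboveI[of _ 1]) auto
  define t0 where "t0 = Sup Z"
  have "t0 \<in> Z" unfolding t0_def using closed_contains_Sup[OF _ bdd \<open>closed Z\<close>] \<open>0 \<in> Z\<close> by blast
  then have t01: "0 \<le> t0" "t0 \<le> 1" and gt0: "g t0 = 0" by (auto simp: Z_def)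
  have "g 1 > e" using yP by (simp add: g_def)
  with lip[of 1 t0] gt0 t01 have "(1 - t0) * D > e" by auto
  then have less1: "t0 + e / D < 1" using D by (simp add: field_simps)
  show ?thesis
  proof (intro exI subsetI)
    fix t assume t: "t \<in> {t0<..t0 + e/D}"
    then have t1: "0 \<le> t" "t \<le> 1" using t01 less1 by auto
    have "t \<notin> Z"
    proof
      assume "t \<in> Z"
      then have "t \<le> t0" unfolding t0_def using bdd by (rule cSup_upper)
      with t show False by simp
    qed
    then have "g t \<noteq> 0" using t1 by (auto simp: Z_def)
    moreover have "g t \<ge> 0" by (simp add: g_def infdist_nonneg)
    moreover have "g t \<le> e"
    proof -
      have "g t \<le> g t0 + \<bar>t - t0\<bar> * D" using lip[of t t0] by linarith
      also have "\<dots> \<le> (e / D) * D" using t gt0 D by (simp add: field_simps)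
      finally show ?thesis using D by simp
    qed
    ultimately show "t \<in> {t \<in> {0..1}. 0 < infdist (x + t *\<^sub>R (y - x)) P \<and> infdist (x + t *\<^sub>R (y - x)) P \<le> e}"
      using t1 by (auto simp: g_def)
  qed
qed


lemma infdist_borel[measurable]: "(\<lambda>z. infdist z P) \<in> borel_measurable borel"
  by (intro borel_measurable_continuous_onI continuous_intros)

lemma half_bound:
  fixes S :: "'a::euclidean_space set"
  assumes S: "S \<in> sets borel" and c: "1/2 \<le> c"
  shows "(\<integral>\<^sup>+y. indicator S (u + c *\<^sub>R y) \<partial>lborel) \<le> ennreal (2^DIM('a)) * emeasure lborel S"
proof -
  let ?I = "\<integral>\<^sup>+y. indicator S (u + c *\<^sub>R y) \<partial>lborel"
  have c0: "c \<noteq> 0" using c by auto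
  have "?I = ennreal 1 * ?I" by simp
  also have "\<dots> \<le> ennreal ((2 * \<bar>c\<bar>)^DIM('a)) * ?I"
    proof (intro mult_right_mono ennreal_leI)
    show "1 \<le> (2 * \<bar>c\<bar>)^DIM('a)" using c by (intro one_le_power) auto
  qed simp
  also have "\<dots> = ennreal (2^DIM('a)) * (ennreal (\<bar>c\<bar>^DIM('a)) * ?I)"
    by (simp add: power_mult_distrib ennreal_mult' mult.assoc)
  also have "\<dots> = ennreal (2^DIM('a)) * emeasure lborel S"
    using aff_int[OF c0 S, of u] by simp
  finally show ?thesis .
qed


lemma iso:
  fixes C P :: "'a::euclidean_space set"
  assumes C: "convex C" and PC: "P \<subseteq> C" and Pb[measurable]: "P \<in> sets borel"
    and Cb[measurable]: "C \<in> sets borel"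
    and e: "0 < e" and D: "0 < D" and diam: "\<And>x y. x \<in> C \<Longrightarrow> y \<in> C \<Longrightarrow> dist x y \<le> D"
  defines "S \<equiv> {z\<in>C. 0 < infdist z P \<and> infdist z P \<le> e}"
    and "B \<equiv> {y\<in>C. e < infdist y P}"
  shows "ennreal (e/D) * emeasure lborel P * emeasure lborel B
         \<le> ennreal (2^DIM('a)) * emeasure lborel C * emeasure lborel S"
proof -
  have Sb[measurable]: "S \<in> sets borel" unfolding S_def by measurable
  have Bb[measurable]: "B \<in> sets borel" unfolding B_def by measurable
  define h where "h x y t = (indicator S (x + t *\<^sub>R (y - x)) :: ennreal)" for x y :: 'a and t :: real
  have hm[measurable]: "(\<lambda>(p, t). h (fst p) (snd p) t) \<in> borel_measurable ((lborel \<Otimes>\<^sub>M lborel) \<Otimes>\<^sub>M (lborel::real measure))"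
    unfolding h_def by measurable
  define F where "F x y t = indicator P x * indicator B y * indicator {0..1::real} t * h x y t" for x y t
  have Fm[measurable]: "(\<lambda>(p, t). F (fst p) (snd p) t) \<in> borel_measurable ((lborel \<Otimes>\<^sub>M lborel) \<Otimes>\<^sub>M (lborel::real measure))"
    unfolding F_def h_def by measurable
  have low: "ennreal (e/D) \<le> (\<integral>\<^sup>+t. indicator {0..1::real} t * h x y t \<partial>lborel)" if x: "x \<in> P" and y: "y \<in> B" for x y
  proof -
    have xC: "x \<in> C" and yC: "y \<in> C" using x y PC by (auto simp: B_def)
    obtain t0 where t0: "{t0<..t0 + e/D} \<subseteq> {t \<in> {0..1}. 0 < infdist (x + t *\<^sub>R (y - x)) P \<and> infdist (x + t *\<^sub>R (y - x)) P \<le> e}"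
      using seg_len[OF x _ e D diam[OF xC yC]] y by (auto simp: B_def)
    have "ennreal (e/D) = emeasure lborel {t0<..t0 + e/D}" using e D by simp
    also have "\<dots> = (\<integral>\<^sup>+t. indicator {t0<..t0 + e/D} t \<partial>lborel)" by simp
    also have "\<dots> \<le> (\<integral>\<^sup>+t. indicator {0..1::real} t * h x y t \<partial>lborel)"
    proof (intro nn_integral_mono)
      fix t :: real
      show "indicator {t0<..t0 + e/D} t \<le> indicator {0..1::real} t * h x y t"
      proof (cases "t \<in> {t0<..t0 + e/D}")
        case True
        with t0 have t: "t \<in> {0..1}" "0 < infdist (x + t *\<^sub>R (y - x)) P" "infdist (x + t *\<^sub>R (y - x)) P \<le> e" by auto
        have "(1 - t) *\<^sub>R x + t *\<^sub>R y \<in> C" using C xC yC t(1) unfolding convex_alt by auto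
        moreover have "(1 - t) *\<^sub>R x + t *\<^sub>R y = x + t *\<^sub>R (y - x)" by (simp add: algebra_simps)
        ultimately have "x + t *\<^sub>R (y - x) \<in> S" using t by (simp add: S_def)
        then show ?thesis using t True by (simp add: h_def)
      qed simp
    qed
    finally show ?thesis .
  qed
  have "ennreal (e/D) * emeasure lborel P * emeasure lborel B
      = (\<integral>\<^sup>+x. (\<integral>\<^sup>+y. indicator P x * indicator B y * ennreal (e/D) \<partial>lborel) \<partial>lborel)"
    by (simp add: nn_integral_cmult nn_integral_multc mult.commute mult.left_commute)
  also have "\<dots> \<le> (\<integral>\<^sup>+x. (\<integral>\<^sup>+y. indicator P x * indicator B y * (\<integral>\<^sup>+t. indicator {0..1::real} t * h x y t \<partial>lborel) \<partial>lborel) \<partial>lborel)"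
    apply (intro nn_integral_mono)
    subgoal for x y by (cases "x \<in> P \<and> y \<in> B") (auto intro: low)
    done
  also have "\<dots> = (\<integral>\<^sup>+x. (\<integral>\<^sup>+y. (\<integral>\<^sup>+t. F x y t \<partial>lborel) \<partial>lborel) \<partial>lborel)"
    unfolding F_def mult.assoc h_def
    apply (intro nn_integral_cong)
    apply (subst nn_integral_cmult, measurable)+
    done
  also have "\<dots> = (\<integral>\<^sup>+x. (\<integral>\<^sup>+t. (\<integral>\<^sup>+y. F x y t \<partial>lborel) \<partial>lborel) \<partial>lborel)"
    by (intro nn_integral_cong lborel_pair.Fubini'[symmetric]) (unfold F_def h_def, measurable)
  also have "\<dots> = (\<integral>\<^sup>+t. (\<integral>\<^sup>+x. (\<integral>\<^sup>+y. F x y t \<partial>lborel) \<partial>lborel) \<partial>lborel)"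
    by (intro lborel_pair.Fubini'[symmetric]) (unfold F_def h_def, measurable)
  also have "\<dots> \<le> (\<integral>\<^sup>+t. indicator {0..1::real} t * (ennreal (2^DIM('a)) * emeasure lborel C * emeasure lborel S) \<partial>lborel)"
  proof (intro nn_integral_mono)
    fix t :: real
    show "(\<integral>\<^sup>+x. (\<integral>\<^sup>+y. F x y t \<partial>lborel) \<partial>lborel) \<le> indicator {0..1::real} t * (ennreal (2^DIM('a)) * emeasure lborel C * emeasure lborel S)"
    proof (cases "t \<in> {0..1}")
      case False
      then show ?thesis by (simp add: F_def)
    next
      case True
      have eqp: "x + t *\<^sub>R (y - x) = (1 - t) *\<^sub>R x + t *\<^sub>R y" for x y :: 'a by (simp add: algebra_simps)
      have F1: "F x y t \<le> indicator P x * indicator S ((1 - t) *\<^sub>R x + t *\<^sub>R y)" for x y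
        unfolding F_def h_def eqp by (simp add: indicator_def)
      have F2: "F x y t \<le> indicator B y * indicator S (t *\<^sub>R y + (1 - t) *\<^sub>R x)" for x y
        unfolding F_def h_def eqp by (simp add: indicator_def add.commute)
      have PC': "emeasure lborel P \<le> emeasure lborel C" using PC by (intro emeasure_mono) auto
      have BC': "emeasure lborel B \<le> emeasure lborel C" by (intro emeasure_mono) (auto simp: B_def)
      show ?thesis
      proof (cases "1/2 \<le> t")
        case True
        have "(\<integral>\<^sup>+x. (\<integral>\<^sup>+y. F x y t \<partial>lborel) \<partial>lborel) \<le> (\<integral>\<^sup>+x. indicator P x * (ennreal (2^DIM('a)) * emeasure lborel S) \<partial>lborel)"
        proof (intro nn_integral_mono)
          fix x
          have "(\<integral>\<^sup>+y. F x y t \<partial>lborel) \<le> (\<integral>\<^sup>+y. indicator P x * indicator S ((1 - t) *\<^sub>R x + t *\<^sub>R y) \<partial>lborel)"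
            by (intro nn_integral_mono F1)
          also have "\<dots> = indicator P x * (\<integral>\<^sup>+y. indicator S ((1 - t) *\<^sub>R x + t *\<^sub>R y) \<partial>lborel)"
            by (subst nn_integral_cmult, measurable)
          also have "\<dots> \<le> indicator P x * (ennreal (2^DIM('a)) * emeasure lborel S)"
            by (intro mult_left_mono half_bound) (use True in auto)
          finally show "(\<integral>\<^sup>+y. F x y t \<partial>lborel) \<le> indicator P x * (ennreal (2^DIM('a)) * emeasure lborel S)" .
        qed
        also have "\<dots> = emeasure lborel P * (ennreal (2^DIM('a)) * emeasure lborel S)"
          by (simp add: nn_integral_multc)
        also have "\<dots> \<le> emeasure lborel C * (ennreal (2^DIM('a)) * emeasure lborel S)"
          by (intro mult_right_mono PC') auto
        finally show ?thesis using \<open>t \<in> {0..1}\<close> by (simp add: mult_ac)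
      next
        case False
        have "(\<integral>\<^sup>+x. (\<integral>\<^sup>+y. F x y t \<partial>lborel) \<partial>lborel) = (\<integral>\<^sup>+y. (\<integral>\<^sup>+x. F x y t \<partial>lborel) \<partial>lborel)"
          by (intro lborel_pair.Fubini'[symmetric]) (unfold F_def h_def, measurable)
        also have "\<dots> \<le> (\<integral>\<^sup>+y. indicator B y * (ennreal (2^DIM('a)) * emeasure lborel S) \<partial>lborel)"
        proof (intro nn_integral_mono)
          fix y
          have "(\<integral>\<^sup>+x. F x y t \<partial>lborel) \<le> (\<integral>\<^sup>+x. indicator B y * indicator S (t *\<^sub>R y + (1 - t) *\<^sub>R x) \<partial>lborel)"
            by (intro nn_integral_mono F2)
          also have "\<dots> = indicator B y * (\<integral>\<^sup>+x. indicator S (t *\<^sub>R y + (1 - t) *\<^sub>R x) \<partial>lborel)"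
            by (subst nn_integral_cmult, measurable)
          also have "\<dots> \<le> indicator B y * (ennreal (2^DIM('a)) * emeasure lborel S)"
            by (intro mult_left_mono half_bound) (use False in auto)
          finally show "(\<integral>\<^sup>+x. F x y t \<partial>lborel) \<le> indicator B y * (ennreal (2^DIM('a)) * emeasure lborel S)" .
        qed
        also have "\<dots> = emeasure lborel B * (ennreal (2^DIM('a)) * emeasure lborel S)"
          by (simp add: nn_integral_multc)
        also have "\<dots> \<le> emeasure lborel C * (ennreal (2^DIM('a)) * emeasure lborel S)"
          by (intro mult_right_mono BC') auto
        finally show ?thesis using \<open>t \<in> {0..1}\<close> by (simp add: mult_ac)
      qed
    qed

  qed
  also have "\<dots> = ennreal (2^DIM('a)) * emeasure lborel C * emeasure lborel S"
    by (simp add: nn_integral_multc)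
  finally show ?thesis .
qed


lemma iso_real:
  fixes C P :: "'a::euclidean_space set"
  assumes C: "convex C" "bounded C" and PC: "P \<subseteq> C" and Pb: "P \<in> sets borel"
    and Cb: "C \<in> sets borel"
    and e: "0 < e" and D: "0 < D" and diam: "\<And>x y. x \<in> C \<Longrightarrow> y \<in> C \<Longrightarrow> dist x y \<le> D"
  shows "e/D * measure lebesgue P * measure lebesgue {y\<in>C. e < infdist y P}
         \<le> 2^DIM('a) * measure lebesgue C * measure lebesgue {z\<in>C. 0 < infdist z P \<and> infdist z P \<le> e}"
proof -
  define S where "S = {z\<in>C. 0 < infdist z P \<and> infdist z P \<le> e}"
  define B where "B = {y\<in>C. e < infdist y P}"
  have Cb'[measurable]: "C \<in> sets borel" by (rule Cb)
  have Sb: "S \<in> sets borel" unfolding S_def by measurable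
  have Bb: "B \<in> sets borel" unfolding B_def by measurable
  have Cfin: "emeasure lborel C < \<infinity>" using C(2) by (rule emeasure_bounded_finite)
  have fin: "emeasure lborel X = ennreal (measure lebesgue X)" if "X \<in> sets borel" "X \<subseteq> C" for X
  proof -
    have "emeasure lborel X \<le> emeasure lborel C" using that Cb by (intro emeasure_mono) auto
    with Cfin have "emeasure lborel X \<noteq> \<infinity>" by auto
    moreover have "emeasure lebesgue X = emeasure lborel X" using that by simp
    ultimately have "emeasure lebesgue X \<noteq> top" by simp
    then have "emeasure lebesgue X = ennreal (measure lebesgue X)" by (rule emeasure_eq_ennreal_measure)
    then show ?thesis using \<open>emeasure lebesgue X = emeasure lborel X\<close> by simp
  qed
  have "ennreal (e/D) * emeasure lborel P * emeasure lborel B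
         \<le> ennreal (2^DIM('a)) * emeasure lborel C * emeasure lborel S"
    unfolding S_def B_def by (rule iso[OF C(1) PC Pb Cb e D diam])
  moreover have "emeasure lborel P = ennreal (measure lebesgue P)" using fin Pb PC by auto
  moreover have "emeasure lborel B = ennreal (measure lebesgue B)" using fin Bb by (auto simp: B_def)
  moreover have "emeasure lborel S = ennreal (measure lebesgue S)" using fin Sb by (auto simp: S_def)
  moreover have "emeasure lborel C = ennreal (measure lebesgue C)" using fin Cb by auto
  ultimately have "ennreal (e/D) * ennreal (measure lebesgue P) * ennreal (measure lebesgue B)
         \<le> ennreal (2^DIM('a)) * ennreal (measure lebesgue C) * ennreal (measure lebesgue S)"
    by simp
  moreover have "ennreal (e/D) * ennreal (measure lebesgue P) * ennreal (measure lebesgue B) = ennreal (e/D * measure lebesgue P * measure lebesgue B)"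
    using e D by (simp add: ennreal_mult[symmetric] del: times_divide_eq_left)
  moreover have "ennreal (2^DIM('a)) * ennreal (measure lebesgue C) * ennreal (measure lebesgue S) = ennreal (2^DIM('a) * measure lebesgue C * measure lebesgue S)"
    by (simp add: ennreal_mult)
  ultimately have "ennreal (e/D * measure lebesgue P * measure lebesgue B) \<le> ennreal (2^DIM('a) * measure lebesgue C * measure lebesgue S)"
    by simp
  then show ?thesis unfolding S_def B_def
    by (rule ennreal_le_iff[THEN iffD1, rotated]) simp
qed


lemma infdist_closure_eq:
  assumes "A \<noteq> {}"
  shows "infdist x (closure A) = infdist x A"
proof (rule antisym)
  show "infdist x (closure A) \<le> infdist x A"
    using assms by (intro infdist_mono closure_subset)
  have "infdist x A \<le> dist x y" if "y \<in> closure A" for y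
  proof -
    have "infdist y A = 0" using that assms in_closure_iff_infdist_zero by blast
    then show ?thesis using infdist_triangle[of x A y] by simp
  qed
  then show "infdist x A \<le> infdist x (closure A)"
    using assms unfolding infdist_def[of x "closure A"] by (auto intro!: cINF_greatest)
qed

lemma gint:
  fixes K T :: "'a::euclidean_space set"
  assumes f[measurable]: "f \<in> borel_measurable (lebesgue_on K)" and K: "K \<in> sets lebesgue"
    and M: "\<And>x. x \<in> K \<Longrightarrow> \<bar>f x\<bar> \<le> M"
    and T: "T \<in> sets lebesgue" "T \<subseteq> K" "emeasure lebesgue T < \<infinity>"
  shows "set_integrable lebesgue T (\<lambda>x. exp (- f x))"
    and "exp (- M) * measure lebesgue T \<le> set_lebesgue_integral lebesgue T (\<lambda>x. exp (- f x))"
    and "set_lebesgue_integral lebesgue T (\<lambda>x. exp (- f x)) \<le> exp M * measure lebesgue T"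
proof -
  have "(\<lambda>x. exp (- f x)) \<in> borel_measurable (lebesgue_on K)" by measurable
  then have gm: "(\<lambda>x. indicator K x *\<^sub>R exp (- f x)) \<in> borel_measurable lebesgue"
    using K by (subst (asm) borel_measurable_restrict_space_iff) auto
  have eq: "indicator T x *\<^sub>R exp (- f x) = indicator T x *\<^sub>R (indicator K x *\<^sub>R exp (- f x))" for x
    using T by (auto simp: indicator_def)
  have im: "(\<lambda>x. indicator T x *\<^sub>R exp (- f x)) \<in> borel_measurable lebesgue"
    unfolding eq using gm T by measurable
  have "integrable lebesgue (\<lambda>x. exp M * indicator T x)"
    using T by (intro integrable_mult_right integrable_real_indicator) auto
  then show si: "set_integrable lebesgue T (\<lambda>x. exp (- f x))"
    unfolding set_integrable_def
  proof (rule Bochner_Integration.integrable_bound)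
    show "(\<lambda>x. indicator T x *\<^sub>R exp (- f x)) \<in> borel_measurable lebesgue" by (rule im)
    show "AE x in lebesgue. norm (indicator T x *\<^sub>R exp (- f x)) \<le> norm (exp M * indicator T x :: real)"
    proof (intro AE_I2)
      fix x
      show "norm (indicator T x *\<^sub>R exp (- f x)) \<le> norm (exp M * indicator T x :: real)"
      proof (cases "x \<in> T")
        case True
        then have "\<bar>f x\<bar> \<le> M" using T M by auto
        then show ?thesis using True by auto
      qed simp
    qed
  qed
  have ci: "set_integrable lebesgue T (\<lambda>x. c)" for c :: real
    unfolding set_integrable_def using T
    by (auto intro!: integrable_mult_left integrable_real_indicator)
  have "exp (- M) * measure lebesgue T = (\<integral>x\<in>T. exp (- M) \<partial>lebesgue)"
    using T by (simp add: set_integral_const)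
  also have "\<dots> \<le> set_lebesgue_integral lebesgue T (\<lambda>x. exp (- f x))"
    using T by (intro set_integral_mono ci si) (use M in \<open>force simp: abs_le_iff\<close>)
  finally show "exp (- M) * measure lebesgue T \<le> set_lebesgue_integral lebesgue T (\<lambda>x. exp (- f x))" .
  have "set_lebesgue_integral lebesgue T (\<lambda>x. exp (- f x)) \<le> (\<integral>x\<in>T. exp M \<partial>lebesgue)"
    using T by (intro set_integral_mono ci si) (use M in \<open>force simp: abs_le_iff\<close>)
  also have "\<dots> = exp M * measure lebesgue T"
    using T by (simp add: set_integral_const)
  finally show "set_lebesgue_integral lebesgue T (\<lambda>x. exp (- f x)) \<le> exp M * measure lebesgue T" .
qed



theorem proposition4:
  fixes K V :: "'a::euclidean_space set" and f :: "'a \<Rightarrow> real"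
  assumes "convex K" and "bounded K"
    and "V \<subseteq> K" and "V \<in> sets lebesgue"
    and "\<exists>L. ((\<lambda>e. measure lebesgue (eps_nbhd K V e)) \<longlongrightarrow> L) (at_right 0)
              \<and> L < measure lebesgue K"
    and "f \<in> borel_measurable (lebesgue_on K)"
    and "bounded (f ` K)"
  shows "cheeger K f V > 0"
proof -
  note convK = assms(1) and bddK = assms(2) and VK = assms(3) and Vl = assms(4) and fm = assms(6)
  obtain L where Lt: "((\<lambda>e. measure lebesgue (eps_nbhd K V e)) \<longlongrightarrow> L) (at_right 0)"
    and LK: "L < measure lebesgue K" using assms(5) by blast
  have Kl: "K \<in> lmeasurable" using convK bddK by (rule measurable_convex)
  then have KS: "K \<in> sets lebesgue" by auto
  obtain M where M: "\<And>x. x \<in> K \<Longrightarrow> \<bar>f x\<bar> \<le> M"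
    using assms(7) unfolding bounded_iff by auto
  have L0: "0 \<le> L"
    by (rule tendsto_lowerbound[OF Lt]) (auto simp: trivial_limit_at_right_real)
  define vK where "vK = measure lebesgue K"
  have vK0: "0 < vK" using L0 LK by (simp add: vK_def)
  define \<delta> where "\<delta> = (vK - L) / 2"
  have \<delta>0: "0 < \<delta>" using LK by (simp add: \<delta>_def vK_def)
  define C where "C = closure K"
  have convC: "convex C" unfolding C_def using convK by (rule convex_closure)
  have bddC: "bounded C" unfolding C_def using bddK by (rule bounded_closure)
  have CB: "C \<in> sets borel" unfolding C_def by simp
  have KC: "K \<subseteq> C" unfolding C_def by (rule closure_subset)
  have negf: "negligible (frontier K)" using convK by (rule negligible_convex_frontier)
  have vC: "measure lebesgue C = vK"
    unfolding C_def vK_def using bddK negf by (rule measure_closure)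
  define D where "D = diameter C + 1"
  have D0: "0 < D" unfolding D_def using diameter_ge_0[OF bddC] by simp
  have diam: "dist x y \<le> D" if "x \<in> C" "y \<in> C" for x y
    using diameter_bounded_bound[OF bddC that] by (simp add: D_def)
  define g where "g x = exp (- f x)" for x
  define Z where "Z = set_lebesgue_integral lebesgue K g"
  have Kfin: "emeasure lebesgue K < \<infinity>" using Kl unfolding fmeasurable_def by (simp del: emeasure_completion)
  have Zlow: "exp (- M) * vK \<le> Z"
    unfolding Z_def g_def vK_def using gint(2)[OF fm KS M KS _ Kfin] by simp
  have Z0: "0 < Z" using Zlow vK0 by (smt (verit) exp_gt_zero mult_pos_pos)
  have muf: "mu_f K f X = set_lebesgue_integral lebesgue (X \<inter> K) g / Z" for X
    unfolding mu_f_def Z_def g_def by simp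
  define c where "c = exp (- M) * \<delta> / (D * 2^DIM('a) * vK * exp M)"
  have c0: "0 < c" unfolding c_def using \<delta>0 D0 vK0 by simp
  have ev: "eventually (\<lambda>e. 0 < e \<and> measure lebesgue (eps_nbhd K V e) < L + \<delta>) (at_right (0::real))"
    using eventually_conj[OF eventually_at_right_less[of 0] order_tendstoD(2)[OF Lt, of "L + \<delta>"]] \<delta>0
    by simp
  have key: "c \<le> (mu_f K f (eps_nbhd K A e) - mu_f K f A) / (e * mu_f K f A)"
    if e: "0 < e" and Ve: "measure lebesgue (eps_nbhd K V e) < L + \<delta>"
      and AV: "A \<subseteq> V" and Al: "A \<in> sets lebesgue" and muA: "mu_f K f A > 0" for e A
  proof -
    have AK: "A \<subseteq> K" using AV VK by auto
    have AKe: "A \<inter> K = A" using AK by auto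
    have bndsub: "X \<in> lmeasurable" if "X \<subseteq> C" "X \<in> sets lebesgue" for X
      using bounded_subset[OF bddC that(1)] that(2) by (rule bounded_set_imp_lmeasurable)
    have Alm: "A \<in> lmeasurable" by (rule bndsub) (use AK KC Al in auto)
    have Afin: "emeasure lebesgue A < \<infinity>" using Alm unfolding fmeasurable_def by (simp del: emeasure_completion)
    define IA where "IA = set_lebesgue_integral lebesgue A g"
    have muA_eq: "mu_f K f A = IA / Z" using muf[of A] AKe by (simp add: IA_def)
    have IA0: "0 < IA" using muA Z0 muA_eq by (simp add: zero_less_divide_iff)
    have Ane: "A \<noteq> {}" using IA0 by (auto simp: IA_def set_lebesgue_integral_def)
    have Vne: "V \<noteq> {}" using Ane AV by auto
    define Ae where "Ae = eps_nbhd K A e"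
    have Ae_eq: "Ae = K \<inter> {x. infdist x A \<le> e}" using Ane by (auto simp: Ae_def eps_nbhd_def)
    have clsA: "{x. infdist x A \<le> e} \<in> sets borel" by measurable
    have Ael: "Ae \<in> sets lebesgue" unfolding Ae_eq by (rule sets.Int[OF KS]) (use clsA in simp)
    have AAe: "A \<subseteq> Ae" unfolding Ae_eq using AK e by (auto simp: infdist_zero)
    have AeK: "Ae \<subseteq> K" unfolding Ae_eq by auto
    have Dl: "Ae - A \<in> sets lebesgue" using Ael Al by auto
    have Dlm: "Ae - A \<in> lmeasurable" by (rule bndsub) (use Dl AeK KC in auto)
    have Dfin: "emeasure lebesgue (Ae - A) < \<infinity>" using Dlm unfolding fmeasurable_def by (simp del: emeasure_completion)
    define ID where "ID = set_lebesgue_integral lebesgue (Ae - A) g"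
    have siA: "set_integrable lebesgue A g" unfolding g_def using gint(1)[OF fm KS M Al AK Afin] .
    have siD: "set_integrable lebesgue (Ae - A) g" unfolding g_def using gint(1)[OF fm KS M Dl _ Dfin] AeK by auto
    have "set_lebesgue_integral lebesgue Ae g = IA + ID"
    proof -
      have "Ae = A \<union> (Ae - A)" using AAe by auto
      then have "set_lebesgue_integral lebesgue Ae g = set_lebesgue_integral lebesgue (A \<union> (Ae - A)) g" by simp
      also have "\<dots> = IA + ID" unfolding IA_def ID_def by (rule set_integral_Un[OF _ siA siD]) auto
      finally show ?thesis .
    qed
    then have num: "mu_f K f Ae - mu_f K f A = ID / Z"
      using muf[of Ae] muA_eq AeK by (simp add: Int_absorb2 diff_divide_distrib[symmetric])
    have IDlow: "exp (- M) * measure lebesgue (Ae - A) \<le> ID"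
      unfolding ID_def g_def using gint(2)[OF fm KS M Dl _ Dfin] AeK by auto
    have IAup: "IA \<le> exp M * measure lebesgue A"
      unfolding IA_def g_def using gint(3)[OF fm KS M Al AK Afin] .
    have mA0: "0 < measure lebesgue A"
    proof (rule ccontr)
      assume "\<not> 0 < measure lebesgue A"
      then have "measure lebesgue A = 0" using measure_nonneg[of lebesgue A] by linarith
      then show False using IA0 IAup by simp
    qed
    define P where "P = closure A"
    have PC: "P \<subseteq> C" unfolding P_def C_def using AK by (rule closure_mono)
    have PB: "P \<in> sets borel" unfolding P_def by simp
    have infP: "infdist z P = infdist z A" for z unfolding P_def using Ane by (rule infdist_closure_eq)
    define S where "S = {z\<in>C. 0 < infdist z P \<and> infdist z P \<le> e}"
    define B where "B = {y\<in>C. e < infdist y P}"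
    have iso1: "e/D * measure lebesgue P * measure lebesgue B \<le> 2^DIM('a) * vK * measure lebesgue S"
      using iso_real[OF convC bddC PC PB CB e D0 diam] vC by (simp add: S_def B_def)
    have Plm: "P \<in> lmeasurable" by (rule bndsub) (use PC PB in auto)
    have mAP: "measure lebesgue A \<le> measure lebesgue P"
      using Al Plm by (intro measure_mono_fmeasurable) (auto simp: P_def closure_subset)
    have CB'[measurable]: "C \<in> sets borel" by (rule CB)
    have SB: "S \<in> sets borel" unfolding S_def by measurable
    have BB: "B \<in> sets borel" unfolding B_def by measurable
    have Blm: "B \<in> lmeasurable" by (rule bndsub) (use BB in \<open>auto simp: B_def\<close>)
    have Slm: "S \<in> lmeasurable" by (rule bndsub) (use SB in \<open>auto simp: S_def\<close>)
    have mB: "\<delta> < measure lebesgue B"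
    proof -
      define Ve where "Ve = eps_nbhd K V e"
      have Ve_eq: "Ve = K \<inter> {x. infdist x V \<le> e}" using Vne by (auto simp: Ve_def eps_nbhd_def)
      have clsV: "{x. infdist x V \<le> e} \<in> sets borel" by measurable
      have Vel: "Ve \<in> sets lebesgue" unfolding Ve_eq by (rule sets.Int[OF KS]) (use clsV in simp)
      have "K - Ve \<subseteq> B"
      proof
        fix x assume x: "x \<in> K - Ve"
        then have "e < infdist x V" unfolding Ve_eq by auto
        also have "infdist x V \<le> infdist x A" using AV Ane by (rule infdist_mono)
        finally show "x \<in> B" using x KC by (auto simp: B_def infP)
      qed
      then have "measure lebesgue (K - Ve) \<le> measure lebesgue B"
        using KS Vel Blm by (intro measure_mono_fmeasurable) auto
      moreover have "measure lebesgue (K - Ve) = vK - measure lebesgue Ve"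
        unfolding vK_def using Kfin KS Vel by (intro measure_Diff) (auto simp: Ve_eq)
      moreover have "measure lebesgue Ve < L + \<delta>" using Ve by (simp add: Ve_def)
      ultimately show ?thesis unfolding \<delta>_def by (smt (verit) field_sum_of_halves)
    qed
    have mS: "measure lebesgue S \<le> measure lebesgue (Ae - A)"
    proof -
      have null: "C - K \<in> null_sets lebesgue"
      proof (rule null_sets_subset)
        show "frontier K \<in> null_sets lebesgue" using negf by (simp add: negligible_iff_null_sets)
        show "C - K \<in> sets lebesgue" by (rule sets.Diff[OF _ KS]) (use CB in simp)
        show "C - K \<subseteq> frontier K" unfolding C_def frontier_def using interior_subset by blast
      qed
      have "S \<subseteq> (Ae - A) \<union> (C - K)"
      proof
        fix z assume z: "z \<in> S"
        show "z \<in> (Ae - A) \<union> (C - K)"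
        proof (cases "z \<in> K")
          case True
          have "z \<notin> A" using z by (auto simp: S_def infP infdist_zero)
          moreover have "z \<in> Ae" using z True by (auto simp: S_def infP Ae_eq)
          ultimately show ?thesis by auto
        next
          case False then show ?thesis using z by (auto simp: S_def)
        qed
      qed
      moreover have "(Ae - A) \<union> (C - K) \<in> lmeasurable"
        using Dl null AeK KC by (intro bndsub) auto
      ultimately have "measure lebesgue S \<le> measure lebesgue ((Ae - A) \<union> (C - K))"
        using SB by (intro measure_mono_fmeasurable) auto
      also have "\<dots> = measure lebesgue (Ae - A)" using Dl null by (rule measure_Un_null_set)
      finally show ?thesis .
    qed
    have mSlow: "e * measure lebesgue A * \<delta> / (D * 2^DIM('a) * vK) \<le> measure lebesgue S"
    proof -
      have "e/D * measure lebesgue A * \<delta> \<le> e/D * measure lebesgue P * measure lebesgue B"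
        using e D0 mAP mB \<delta>0 mA0 by (intro mult_mono) auto
      with iso1 have "e/D * measure lebesgue A * \<delta> \<le> 2^DIM('a) * vK * measure lebesgue S" by linarith
      then show ?thesis using D0 vK0 by (simp add: field_simps)
    qed
    define lb where "lb = exp (- M) * (e * measure lebesgue A * \<delta> / (D * 2^DIM('a) * vK))"
    have lbID: "lb \<le> ID"
    proof -
      have "lb \<le> exp (- M) * measure lebesgue (Ae - A)"
        unfolding lb_def using mSlow mS by (intro mult_left_mono) auto
      then show ?thesis using IDlow by linarith
    qed
    have lb0: "0 \<le> lb" unfolding lb_def using e mA0 \<delta>0 D0 vK0 by simp
    have "(mu_f K f Ae - mu_f K f A) / (e * mu_f K f A) = ID / (e * IA)"
      unfolding num unfolding muA_eq using Z0 by (simp add: field_simps)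
    also have "\<dots> \<ge> lb / (e * (exp M * measure lebesgue A))"
    proof (rule frac_le)
      show "0 \<le> ID" using lb0 lbID by linarith
      show "lb \<le> ID" by (rule lbID)
      show "0 < e * IA" using e IA0 by simp
      show "e * IA \<le> e * (exp M * measure lebesgue A)" using e IAup by simp
    qed
    also have "lb / (e * (exp M * measure lebesgue A)) = c"
      unfolding lb_def c_def using e mA0 by (simp add: field_simps)
    finally show ?thesis by (simp add: Ae_def)
  qed

  have "ereal c \<le> cheeger K f V"
    unfolding cheeger_def
  proof (rule Liminf_bounded, rule eventually_mono[OF ev])
    fix e :: real assume "0 < e \<and> measure lebesgue (eps_nbhd K V e) < L + \<delta>"
    then show "ereal c \<le> (INF A \<in> {A. A \<subseteq> V \<and> A \<in> sets lebesgue \<and> mu_f K f A > 0}.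
         ereal ((mu_f K f (eps_nbhd K A e) - mu_f K f A) / (e * mu_f K f A)))"
      using key by (auto intro!: INF_greatest)
  qed
  then show ?thesis using c0 by (metis ereal_less(2) less_le_trans)
qed


end
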